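(* Let $n,p$ be positive integers and $d$ a positive integer with $d\leq e^{-3/2}(p-1)$ and $n-d-1\geq1$. Then $$\mathrm{EDKhi}\Big[d+1,\,n-d-1,\,\Big[\binom{p-1}{d}(d+1)^2\Big]^{-1}\Big]\geq d+1.$$
   Context: For integers $d,N\geq1$ and $x>0$, $\mathrm{DKhi}(d,N,x)=\mathbb P(F_{d+2,N}\geq x/(d+2))-\frac{x}{d}\mathbb P(F_{d,N+2}\geq\frac{N+2}{Nd}x)$, where $F_{d,N}$ is a Fisher random variable with $d$ and $N$ degrees of freedom; $x\mapsto\mathrm{DKhi}(d,N,x)$ is decreasing and $\mathrm{EDKhi}(d,N,\cdot)$ denotes its inverse function. *)

theory Defs
  imports "HOL-Probability.Probability"
begin

definition fisher_density :: "nat \<Rightarrow> nat \<Rightarrow> real \<Rightarrow> real" where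
  "fisher_density d1 d2 x =
     (if x > 0 then
        (real d1 / real d2) powr (real d1 / 2) * x powr (real d1 / 2 - 1)
        * (1 + real d1 * x / real d2) powr (- (real d1 + real d2) / 2)
        / Beta (real d1 / 2) (real d2 / 2)
      else 0)"

definition fisher_distr :: "nat \<Rightarrow> nat \<Rightarrow> real measure" where
  "fisher_distr d1 d2 = density lborel (\<lambda>x. ennreal (fisher_density d1 d2 x))"

definition fisher_tail :: "nat \<Rightarrow> nat \<Rightarrow> real \<Rightarrow> real" where
  "fisher_tail d1 d2 t = measure (fisher_distr d1 d2) {t..}"

definition DKhi :: "nat \<Rightarrow> nat \<Rightarrow> real \<Rightarrow> real" where
  "DKhi d N x = fisher_tail (d + 2) N (x / (real d + 2))
      - x / real d * fisher_tail d (N + 2) ((real N + 2) / (real N * real d) * x)"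

definition EDKhi :: "nat \<Rightarrow> nat \<Rightarrow> real \<Rightarrow> real" where
  "EDKhi d N y = (THE x. x > 0 \<and> DKhi d N x = y)"

end

theory Submission
  imports Defs
begin

lemma tail_pow1:
  fixes v b :: real assumes v: "v \<ge> 0" and b: "b > 0"
  shows "set_integrable lborel {v..} (\<lambda>w. (1+w) powr (-b-1))"
    and "(LINT w:{v..}|lborel. (1+w) powr (-b-1)) = (1+v) powr (-b) / b"
proof -
  define F where "F \<equiv> \<lambda>x::real. - ((1+x) powr (-b)) / b"
  have h2: "((\<lambda>x. (1+x) powr (-b-1)) has_integral (1+v) powr (-b) / b) {v..}"
  proof (intro has_integral_to_inf integrable_continuous_interval continuous_intros)
    have "((\<lambda>x. (1+x) powr (-b-1)) has_integral (F y - F v)) {v..y}" if "y \<ge> v" for y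
    proof (intro fundamental_theorem_of_calculus that)
      fix x assume x: "x \<in> {v..y}"
      have p: "(1+x) powr b > 0" using x v by auto
      have "(F has_real_derivative (1+x) powr (-b-1)) (at x within {v..y})"
        unfolding F_def using x v b p
        apply (auto intro!: derivative_eq_intros simp: powr_diff powr_minus)
        done
      thus "(F has_vector_derivative (1+x) powr (-b-1)) (at x within {v..y})"
        by (simp add: has_real_derivative_iff_has_vector_derivative)
    qed
    then have "\<forall>\<^sub>F y in at_top. integral {v..y} (\<lambda>x. (1+x) powr (-b-1)) = F y - F v"
      by (meson eventually_at_top_linorderI integral_unique)
    moreover have "((\<lambda>y::real. F y - F v) \<longlongrightarrow> - F v) at_top"
      using b unfolding F_def by real_asymp
    ultimately
    show "((\<lambda>y. integral {v..y} (\<lambda>x. (1+x) powr (-b-1)))  \<longlongrightarrow> (1+v) powr (-b) / b) at_top"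
      by (simp add: F_def filterlim_cong)
  qed (use v in auto)
  hence "(\<lambda>x. (1+x) powr (-b-1)) integrable_on {v..}" by blast
  hence "(\<lambda>x. (1+x) powr (-b-1)) absolutely_integrable_on {v..}"
    by (subst absolutely_integrable_on_iff_nonneg) auto
  thus si: "set_integrable lborel {v..} (\<lambda>w. (1+w) powr (-b-1))"
    unfolding set_integrable_def
    by (subst (asm) integrable_completion) (auto)
  from set_borel_integral_eq_integral[OF si] h2
  show "(LINT w:{v..}|lborel. (1+w) powr (-b-1)) = (1+v) powr (-b) / b"
    by (simp add: integral_unique)
qed

lemma fd_meas[measurable]: "fisher_density a b \<in> borel_measurable borel"
  unfolding fisher_density_def by measurable

lemma fd_nonneg: "fisher_density a b t \<ge> 0"
proof -
  have "Beta (real a / 2) (real b / 2) \<ge> 0"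
    unfolding Beta_def by (cases "a = 0"; cases "b = 0") (auto intro!: divide_nonneg_nonneg mult_nonneg_nonneg)
  thus ?thesis unfolding fisher_density_def by auto
qed

lemma fd_scale:
  fixes a b :: nat and w :: real
  assumes a: "a \<ge> 1" and b: "b \<ge> 1" and w: "w > 0"
  shows "fisher_density a b (real b / real a * w) =
     real a / real b * (w powr (real a/2-1) * (1+w) powr (-(real a + real b)/2) / Beta (real a/2) (real b/2))"
proof -
  define A where "A = real a" define B where "B = real b"
  have A: "A > 0" and B: "B > 0" using a b by (auto simp: A_def B_def)
  have t: "B / A * w > 0" using A B w by auto
  have e1: "A * (B / A * w) / B = w" using A B by auto
  have e2: "(B / A * w) powr (A/2-1) = (B/A) powr (A/2-1) * w powr (A/2-1)"
    using powr_mult[of "B/A" w "A/2-1"] A B w by simp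
  have e3: "(A / B) powr (A/2) * (B/A) powr (A/2-1) = A / B"
  proof -
    have ge: "(B/A) powr e = (A/B) powr (-e)" for e
      using A B by (simp add: powr_minus powr_divide)
    have "(B/A) powr (A/2-1) = (A/B) powr (-(A/2-1))" by (rule ge)
    moreover have "(A / B) powr (A/2) * (A/B) powr (-(A/2-1)) = (A/B) powr (A/2 + (-(A/2-1)))"
      by (rule powr_add[symmetric])
    moreover have "(A/B) powr (A/2 + (-(A/2-1))) = A / B" using A B by simp
    ultimately show ?thesis by simp
  qed
  have "fisher_density a b (B / A * w) =
     ((A / B) powr (A/2) * (B/A) powr (A/2-1)) * (w powr (A/2-1) * (1+w) powr (-(A+B)/2)) / Beta (A/2) (B/2)"
    unfolding fisher_density_def A_def[symmetric] B_def[symmetric] using t e1 e2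
    by (simp add: mult_ac)
  also have "\<dots> = A / B * (w powr (A/2-1) * (1+w) powr (-(A+B)/2) / Beta (A/2) (B/2))"
    by (simp add: e3)
  finally show ?thesis by (simp add: A_def B_def)
qed

lemma Beta_pos: "a > 0 \<Longrightarrow> b > 0 \<Longrightarrow> Beta a b > (0::real)"
  unfolding Beta_def by auto

lemma bp_integrable:
  fixes p q u :: real
  assumes u: "u > 0" and p: "p \<ge> 0" and q: "q - p > 1"
  shows "set_integrable lborel {u..} (\<lambda>w. w powr p * (1+w) powr (-q))"
proof -
  have int: "set_integrable lborel {u..} (\<lambda>w. (1+w) powr (-(q-p-1)-1))"
    using tail_pow1(1)[of u "q-p-1"] u q by auto
  show ?thesis
    unfolding set_integrable_def
  proof (rule Bochner_Integration.integrable_bound[OF int[unfolded set_integrable_def]])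
    show "(\<lambda>x. indicat_real {u..} x *\<^sub>R (x powr p * (1 + x) powr - q)) \<in> borel_measurable lborel"
      by measurable
    show "AE x in lborel. norm (indicat_real {u..} x *\<^sub>R (x powr p * (1 + x) powr - q))
           \<le> norm (indicat_real {u..} x *\<^sub>R (1 + x) powr (- (q - p - 1) - 1))"
    proof (rule AE_I2)
      fix x :: real
      show "norm (indicat_real {u..} x *\<^sub>R (x powr p * (1 + x) powr - q))
           \<le> norm (indicat_real {u..} x *\<^sub>R (1 + x) powr (- (q - p - 1) - 1))"
      proof (cases "x \<ge> u")
        case True
        hence x: "x > 0" using u by auto
        have "x powr p * (1 + x) powr - q \<le> (1+x) powr p * (1 + x) powr - q"
          using x p by (intro mult_right_mono powr_mono2) auto
        also have "\<dots> = (1+x) powr (p - q)" using x by (simp add: powr_add[symmetric])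
        finally have "x powr p * (1 + x) powr - q \<le> (1+x) powr (-(q-p))" by simp
        thus ?thesis using True x by (auto simp: indicator_def)
      qed (auto simp: indicator_def)
    qed
  qed
qed

lemma fisher_tail_eq:
  fixes a b :: nat and s :: real
  assumes a: "a \<ge> 2" and b: "b \<ge> 1" and s: "s > 0"
  shows "fisher_tail a b s =
    (LINT w:{real a * s / real b..}|lborel. w powr (real a/2-1) * (1+w) powr (-(real a + real b)/2))
      / Beta (real a/2) (real b/2)"
proof -
  define A where "A = real a" define B where "B = real b"
  have A: "A \<ge> 2" and B: "B \<ge> 1" using a b by (auto simp: A_def B_def)
  define u where "u = A * s / B"
  have u: "u > 0" using A B s by (auto simp: u_def)
  define f where "f = (\<lambda>w::real. w powr (A/2-1) * (1+w) powr (-(A+B)/2))"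
  define Bt where "Bt = Beta (A/2) (B/2)"
  have Bt: "Bt > 0" unfolding Bt_def using A B by (intro Beta_pos) auto
  have fint: "set_integrable lborel {u..} f"
    unfolding f_def
  proof -
    have "set_integrable lborel {u..} (\<lambda>w. w powr (A/2-1) * (1+w) powr (-((A+B)/2)))"
      by (rule bp_integrable) (use u A B in auto)
    thus "set_integrable lborel {u..} (\<lambda>w. w powr (A/2-1) * (1+w) powr (-(A+B)/2))"
      by (simp only: minus_divide_left)
  qed
  define h where "h = (\<lambda>w. indicator {u..} w * f w / Bt)"
  have hint: "integrable lborel h"
    using fint Bt unfolding h_def set_integrable_def by (auto intro: integrable_divide)
  have hnn: "h w \<ge> 0" for w
    unfolding h_def f_def using Bt by (auto simp: indicator_def)
  have hmeas: "h \<in> borel_measurable borel"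
    unfolding h_def f_def by measurable
  have em: "emeasure (fisher_distr a b) {s..} = (\<integral>\<^sup>+ t. ennreal (fisher_density a b t) * indicator {s..} t \<partial>lborel)"
    unfolding fisher_distr_def by (subst emeasure_density) auto
  also have "\<dots> = ennreal \<bar>B/A\<bar> * (\<integral>\<^sup>+ w. ennreal (fisher_density a b (0 + B/A * w)) * indicator {s..} (0 + B/A*w) \<partial>lborel)"
    using A B by (intro nn_integral_real_affine) auto
  also have "\<dots> = ennreal (B/A) * (\<integral>\<^sup>+ w. ennreal (A/B) * ennreal (h w) \<partial>lborel)"
  proof -
    have "ennreal (fisher_density a b (0 + B/A * w)) * indicator {s..} (0 + B/A*w) = ennreal (A/B) * ennreal (h w)" for w
    proof (cases "w > 0")
      case True
      have iff: "s \<le> B/A*w \<longleftrightarrow> u \<le> w" using A B unfolding u_def by (auto simp: field_simps)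
      have "fisher_density a b (B / A * w) = A/B * (f w / Bt)"
        using fd_scale[of a b w] a b True unfolding A_def B_def f_def Bt_def by simp
      thus ?thesis using iff A B Bt hnn unfolding h_def
        by (auto simp: indicator_def ennreal_mult[symmetric] f_def)
    next
      case False
      have "B/A * w \<le> 0" using A B False by (intro mult_nonneg_nonpos) auto
      hence "\<not> s \<le> B/A*w" using s by linarith
      moreover have "\<not> u \<le> w" using False u by auto
      ultimately show ?thesis unfolding h_def by (auto simp: indicator_def)
    qed
    thus ?thesis using A B by simp
  qed
  also have "\<dots> = ennreal (B/A) * ennreal (A/B) * (\<integral>\<^sup>+ w. ennreal (h w) \<partial>lborel)"
    using hmeas by (subst nn_integral_cmult) (auto simp: mult.assoc)
  also have "ennreal (B/A) * ennreal (A/B) = 1" using A B by (simp add: ennreal_mult[symmetric])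
  also have "(\<integral>\<^sup>+ w. ennreal (h w) \<partial>lborel) = ennreal (integral\<^sup>L lborel h)"
    using hint hnn by (intro nn_integral_eq_integral) auto
  finally have em2: "emeasure (fisher_distr a b) {s..} = ennreal (integral\<^sup>L lborel h)" by simp
  have "integral\<^sup>L lborel h \<ge> 0" using hnn by auto
  hence "fisher_tail a b s = integral\<^sup>L lborel h"
    unfolding fisher_tail_def measure_def em2 by simp
  also have "integral\<^sup>L lborel h = (LINT w:{u..}|lborel. f w) / Bt"
    unfolding h_def set_lebesgue_integral_def by simp
  finally show ?thesis unfolding u_def f_def Bt_def A_def B_def .
qed

definition kf :: "real \<Rightarrow> real \<Rightarrow> real \<Rightarrow> real" where
  "kf al be w = w powr (al-1) * (1+w) powr (-(al+be+1))"

definition HH :: "real \<Rightarrow> real \<Rightarrow> real \<Rightarrow> real" where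
  "HH al be u = (LINT w:{u..}|lborel. (w - u) * kf al be w)"

lemma kf_meas[measurable]: "kf al be \<in> borel_measurable borel"
  unfolding kf_def by measurable

lemma kf_int:
  assumes "al \<ge> 1" "be > 0" "u > 0"
  shows "set_integrable lborel {u..} (kf al be)"
  unfolding kf_def by (rule bp_integrable) (use assms in auto)

lemma wkf_eq: "w > 0 \<Longrightarrow> w * kf al be w = w powr al * (1+w) powr (-(al+be+1))"
  unfolding kf_def by (simp add: powr_diff)

lemma wkf_int:
  assumes "al \<ge> 1" "be > 0" "u > 0"
  shows "set_integrable lborel {u..} (\<lambda>w. w * kf al be w)"
proof -
  have "set_integrable lborel {u..} (\<lambda>w. w powr al * (1+w) powr (-(al+be+1)))"
    by (rule bp_integrable) (use assms in auto)
  thus ?thesis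
    by (rule set_integrable_cong[THEN iffD1, rotated -1]) (use assms wkf_eq in auto)
qed

lemma kf_nonneg: "w > 0 \<Longrightarrow> kf al be w \<ge> 0"
  unfolding kf_def by auto

lemma HH_split:
  assumes "al \<ge> 1" "be > 0" "u > 0"
  shows "HH al be u = (LINT w:{u..}|lborel. w * kf al be w) - u * (LINT w:{u..}|lborel. kf al be w)"
proof -
  have "HH al be u = (LINT w:{u..}|lborel. w * kf al be w - u * kf al be w)"
    unfolding HH_def by (simp add: left_diff_distrib)
  also have "\<dots> = (LINT w:{u..}|lborel. w * kf al be w) - (LINT w:{u..}|lborel. u * kf al be w)"
    by (rule set_integral_diff) (use wkf_int[OF assms] kf_int[OF assms] in \<open>auto intro: set_integrable_mult_right\<close>)
  also have "(LINT w:{u..}|lborel. u * kf al be w) = u * (LINT w:{u..}|lborel. kf al be w)"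
    by (rule set_integral_mult_right)
  finally show ?thesis .
qed

lemma Beta_rel:
  fixes al be :: real assumes "al > 0" "be > 0"
  shows "be * Beta (al+1) be = al * Beta al (be+1)"
proof -
  have nz1: "al \<notin> \<int>\<^sub>\<le>\<^sub>0" using assms by (auto elim!: nonpos_Ints_cases)
  have nz2: "be \<notin> \<int>\<^sub>\<le>\<^sub>0" using assms by (auto elim!: nonpos_Ints_cases)
  have e1: "(al + be) * Beta (al + 1) be = al * Beta al be" by (rule Beta_plus1_left[OF nz1])
  have e2: "(al + be) * Beta al (be + 1) = be * Beta al be" by (rule Beta_plus1_right[OF nz2])
  have "(al+be) * (be * Beta (al+1) be) = (al+be) * (al * Beta al (be+1))"
    using e1 e2 by (simp add: algebra_simps)
  thus ?thesis using assms by simp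
qed

lemma DKhi_eq:
  fixes D N :: nat and x :: real
  assumes D: "D \<ge> 2" and N: "N \<ge> 1" and x: "x > 0"
  shows "DKhi D N x = HH (real D/2) (real N/2) (x / real N) / Beta (real D/2 + 1) (real N/2)"
proof -
  define al where "al = real D / 2" define be where "be = real N / 2"
  have al: "al \<ge> 1" and be: "be > 0" using D N by (auto simp: al_def be_def)
  define u where "u = x / real N"
  have u: "u > 0" using x N by (auto simp: u_def)
  define B1 where "B1 = Beta (al+1) be"
  define B2 where "B2 = Beta al (be+1)"
  have B1: "B1 > 0" unfolding B1_def using al be by (intro Beta_pos) auto
  have B2: "B2 > 0" unfolding B2_def using al be by (intro Beta_pos) auto
  have rel: "be * B1 = al * B2" unfolding B1_def B2_def using al be by (intro Beta_rel) auto
  have T1: "fisher_tail (D + 2) N (x / (real D + 2)) = (LINT w:{u..}|lborel. w * kf al be w) / B1"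
  proof -
    have "fisher_tail (D + 2) N (x / (real D + 2)) =
      (LINT w:{real (D+2) * (x / (real D + 2)) / real N..}|lborel. w powr (real (D+2)/2-1) * (1+w) powr (-(real (D+2) + real N)/2))
      / Beta (real (D+2)/2) (real N/2)"
      by (rule fisher_tail_eq) (use D N x in auto)
    also have "real (D+2) * (x / (real D + 2)) / real N = u"
    proof - have "real D + 2 > 0" by simp thus ?thesis by (simp add: add.commute u_def) qed
    also have "Beta (real (D+2)/2) (real N/2) = B1" unfolding B1_def al_def be_def
      by (simp add: add_divide_distrib add.commute)
    also have "(LINT w:{u..}|lborel. w powr (real (D+2)/2-1) * (1+w) powr (-(real (D+2) + real N)/2))
        = (LINT w:{u..}|lborel. w * kf al be w)"
    proof (rule set_lebesgue_integral_cong)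
      show "\<forall>w. w \<in> {u..} \<longrightarrow> w powr (real (D+2)/2-1) * (1+w) powr (-(real (D+2) + real N)/2) = w * kf al be w"
      proof (intro allI impI)
        fix w assume "w \<in> {u..}" hence w: "w > 0" using u by auto
        have e1: "real (D+2)/2-1 = al" and e2: "-(real (D+2) + real N)/2 = -(al+be+1)"
          unfolding al_def be_def by (auto simp: field_simps)
        show "w powr (real (D+2)/2-1) * (1+w) powr (-(real (D+2) + real N)/2) = w * kf al be w"
          by (subst e1, subst e2, rule wkf_eq[OF w, symmetric])
      qed
    qed auto
    finally show ?thesis .
  qed
  have T2: "fisher_tail D (N + 2) ((real N + 2) / (real N * real D) * x) = (LINT w:{u..}|lborel. kf al be w) / B2"
  proof -
    have "fisher_tail D (N+2) ((real N + 2) / (real N * real D) * x) =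
      (LINT w:{real D * ((real N + 2) / (real N * real D) * x) / real (N+2)..}|lborel. w powr (real D/2-1) * (1+w) powr (-(real D + real (N+2))/2))
      / Beta (real D/2) (real (N+2)/2)"
      by (rule fisher_tail_eq) (use D N x in \<open>auto intro!: mult_pos_pos divide_pos_pos\<close>)
    also have "real D * ((real N + 2) / (real N * real D) * x) / real (N+2) = u"
    proof -
      have p: "real D > 0" "real N > 0" "real N + 2 > 0" using D N by auto
      have "real D * ((real N + 2) / (real N * real D) * x) / real (N+2) = (real D * (real N + 2)) * x / ((real N * real D) * (real N + 2))"
        by (simp add: field_simps)
      also have "\<dots> = (real D * (real N + 2)) * x / ((real D * (real N + 2)) * real N)" by (simp add: mult_ac)
      also have "\<dots> = x / real N" using p by (subst nonzero_mult_divide_mult_cancel_left) auto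
      finally show ?thesis by (simp add: u_def)
    qed
    also have "Beta (real D/2) (real (N+2)/2) = B2" unfolding B2_def al_def be_def
      by (simp add: add_divide_distrib add.commute)
    also have "(LINT w:{u..}|lborel. w powr (real D/2-1) * (1+w) powr (-(real D + real (N+2))/2))
        = (LINT w:{u..}|lborel. kf al be w)"
    proof (rule set_lebesgue_integral_cong)
      show "\<forall>w. w \<in> {u..} \<longrightarrow> w powr (real D/2-1) * (1+w) powr (-(real D + real (N+2))/2) = kf al be w"
      proof (intro allI impI)
        fix w assume "w \<in> {u..}"
        have e1: "real D/2-1 = al-1" and e2: "-(real D + real (N+2))/2 = -(al+be+1)"
          unfolding al_def be_def by (auto simp: field_simps)
        show "w powr (real D/2-1) * (1+w) powr (-(real D + real (N+2))/2) = kf al be w"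
          unfolding kf_def by (subst e1, subst e2, rule refl)
      qed
    qed auto
    finally show ?thesis .
  qed
  have c: "x / real D / B2 = u / B1"
  proof -
    have "x = 2 * be * u" "real D = 2 * al" unfolding u_def be_def al_def using N by auto
    thus ?thesis using rel B1 B2 al be by (simp add: field_simps)
  qed
  have "DKhi D N x = (LINT w:{u..}|lborel. w * kf al be w) / B1 - x / real D * ((LINT w:{u..}|lborel. kf al be w) / B2)"
    unfolding DKhi_def T1 T2 ..
  also have "\<dots> = ((LINT w:{u..}|lborel. w * kf al be w) - u * (LINT w:{u..}|lborel. kf al be w)) / B1"
  proof -
    have "x / real D * ((LINT w:{u..}|lborel. kf al be w) / B2) = (x / real D / B2) * (LINT w:{u..}|lborel. kf al be w)"
      by simp
    also have "\<dots> = u / B1 * (LINT w:{u..}|lborel. kf al be w)" by (simp only: c)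
    finally show ?thesis by (simp add: diff_divide_distrib)
  qed
  also have "\<dots> = HH al be u / B1" using HH_split[OF al be u] by simp
  finally show ?thesis unfolding al_def be_def u_def B1_def .
qed

definition J0 :: "real \<Rightarrow> real \<Rightarrow> real \<Rightarrow> real" where
  "J0 al be u = (LINT w:{u..}|lborel. kf al be w)"

context
  fixes al be :: real
  assumes al: "al \<ge> 1" and be: "be > 0"
begin

lemma HH_int: "u > 0 \<Longrightarrow> set_integrable lborel {u..} (\<lambda>w. (w - u) * kf al be w)"
proof -
  assume u: "u > 0"
  have "set_integrable lborel {u..} (\<lambda>w. w * kf al be w - u * kf al be w)"
    by (intro set_integral_diff set_integrable_mult_right wkf_int kf_int) (use al be u in auto)
  thus ?thesis by (simp add: left_diff_distrib)
qed

lemma ind_int: "u > 0 \<Longrightarrow> integrable lborel (\<lambda>w. indicator {u..} w * ((w - u) * kf al be w))"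
  using HH_int unfolding set_integrable_def by simp

lemma indk_int: "u > 0 \<Longrightarrow> integrable lborel (\<lambda>w. indicator {u..} w * kf al be w)"
  using kf_int[OF al be] unfolding set_integrable_def by simp

lemma HH_mono_ineq:
  assumes u1: "u1 > 0" and u12: "u1 \<le> u2"
  shows "HH al be u2 + (u2 - u1) * J0 al be u2 \<le> HH al be u1"
proof -
  have u2: "u2 > 0" using u1 u12 by auto
  have "HH al be u2 + (u2 - u1) * J0 al be u2 =
     (\<integral>w. indicator {u2..} w * ((w - u2) * kf al be w) + (u2 - u1) * (indicator {u2..} w * kf al be w) \<partial>lborel)"
    unfolding HH_def J0_def set_lebesgue_integral_def
    using ind_int[OF u2] indk_int[OF u2] by simp
  also have "\<dots> \<le> (\<integral>w. indicator {u1..} w * ((w - u1) * kf al be w) \<partial>lborel)"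
  proof (rule integral_mono)
    show "integrable lborel (\<lambda>w. indicator {u2..} w * ((w - u2) * kf al be w) + (u2 - u1) * (indicator {u2..} w * kf al be w))"
      using ind_int[OF u2] indk_int[OF u2] by auto
    show "integrable lborel (\<lambda>w. indicator {u1..} w * ((w - u1) * kf al be w))"
      using ind_int[OF u1] .
    fix w :: real
    show "indicator {u2..} w * ((w - u2) * kf al be w) + (u2 - u1) * (indicator {u2..} w * kf al be w)
        \<le> indicator {u1..} w * ((w - u1) * kf al be w)"
    proof (cases "w \<ge> u2")
      case True thus ?thesis using u12 by (simp add: indicator_def algebra_simps)
    next
      case False
      show ?thesis
      proof (cases "w \<ge> u1")
        case True
        hence "kf al be w \<ge> 0" using u1 by (intro kf_nonneg) auto
        thus ?thesis using True False by (simp add: indicator_def)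
      qed (use False in \<open>simp add: indicator_def\<close>)
    qed
  qed
  also have "\<dots> = HH al be u1" unfolding HH_def set_lebesgue_integral_def by simp
  finally show ?thesis .
qed

lemma HH_lip_ineq:
  assumes u1: "u1 > 0" and u12: "u1 \<le> u2"
  shows "HH al be u1 - HH al be u2 \<le> (u2 - u1) * J0 al be u1"
proof -
  have u2: "u2 > 0" using u1 u12 by auto
  have "HH al be u1 \<le> HH al be u2 + (u2 - u1) * J0 al be u1"
  proof -
    have "HH al be u1 = (\<integral>w. indicator {u1..} w * ((w - u1) * kf al be w) \<partial>lborel)"
      unfolding HH_def set_lebesgue_integral_def by simp
    also have "\<dots> \<le> (\<integral>w. indicator {u2..} w * ((w - u2) * kf al be w) + (u2 - u1) * (indicator {u1..} w * kf al be w) \<partial>lborel)"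
    proof (rule integral_mono)
      show "integrable lborel (\<lambda>w. indicator {u2..} w * ((w - u2) * kf al be w) + (u2 - u1) * (indicator {u1..} w * kf al be w))"
        using ind_int[OF u2] indk_int[OF u1] by auto
      show "integrable lborel (\<lambda>w. indicator {u1..} w * ((w - u1) * kf al be w))"
        using ind_int[OF u1] .
      fix w :: real
      show "indicator {u1..} w * ((w - u1) * kf al be w)
          \<le> indicator {u2..} w * ((w - u2) * kf al be w) + (u2 - u1) * (indicator {u1..} w * kf al be w)"
      proof (cases "w \<ge> u1")
        case True
        hence k: "kf al be w \<ge> 0" using u1 by (intro kf_nonneg) auto
        show ?thesis
        proof (cases "w \<ge> u2")
          case True thus ?thesis using u12 \<open>w \<ge> u1\<close> by (simp add: indicator_def algebra_simps)
        next
          case False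
          have "(w - u1) * kf al be w \<le> (u2 - u1) * kf al be w"
            using False k by (intro mult_right_mono) auto
          thus ?thesis using False \<open>w \<ge> u1\<close> by (simp add: indicator_def)
        qed
      qed (use u12 in \<open>simp add: indicator_def\<close>)
    qed
    also have "\<dots> = HH al be u2 + (u2 - u1) * J0 al be u1"
      unfolding HH_def J0_def set_lebesgue_integral_def
      using ind_int[OF u2] indk_int[OF u1] by simp
    finally show ?thesis .
  qed
  thus ?thesis by simp
qed

lemma J0_antimono:
  assumes u1: "u1 > 0" and u12: "u1 \<le> u2"
  shows "J0 al be u2 \<le> J0 al be u1"
  unfolding J0_def set_lebesgue_integral_def
proof (rule integral_mono)
  show "integrable lborel (\<lambda>x. indicat_real {u2..} x *\<^sub>R kf al be x)"
    using indk_int[of u2] u1 u12 by simp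
  show "integrable lborel (\<lambda>x. indicat_real {u1..} x *\<^sub>R kf al be x)"
    using indk_int[of u1] u1 by simp
  fix w :: real
  show "indicat_real {u2..} w *\<^sub>R kf al be w \<le> indicat_real {u1..} w *\<^sub>R kf al be w"
    using u1 u12 kf_nonneg[of w al be] by (auto simp: indicator_def)
qed

lemma J0_pos:
  assumes u: "u > 0"
  shows "J0 al be u > 0"
proof -
  have int: "set_integrable lborel {u..} (\<lambda>w. (1+w) powr (-(al+be)-1))"
    using tail_pow1(1)[of u "al+be"] u al be by auto
  have v: "(LINT w:{u..}|lborel. (1+w) powr (-(al+be)-1)) = (1+u) powr (-(al+be)) / (al+be)"
    using tail_pow1(2)[of u "al+be"] u al be by auto
  have "u powr (al-1) * (LINT w:{u..}|lborel. (1+w) powr (-(al+be)-1)) \<le> J0 al be u"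
    unfolding J0_def set_lebesgue_integral_def
  proof -
    have "u powr (al-1) * (\<integral>w. indicat_real {u..} w *\<^sub>R (1 + w) powr (- (al + be) - 1) \<partial>lborel)
      = (\<integral>w. u powr (al-1) * (indicat_real {u..} w *\<^sub>R (1 + w) powr (- (al + be) - 1)) \<partial>lborel)"
      by simp
    also have "\<dots> \<le> (\<integral>w. indicat_real {u..} w *\<^sub>R kf al be w \<partial>lborel)"
    proof (rule integral_mono)
      show "integrable lborel (\<lambda>w. u powr (al-1) * (indicat_real {u..} w *\<^sub>R (1 + w) powr (- (al + be) - 1)))"
        using int unfolding set_integrable_def by auto
      show "integrable lborel (\<lambda>w. indicat_real {u..} w *\<^sub>R kf al be w)"
        using indk_int[OF u] by simp
      fix w :: real
      show "u powr (al-1) * (indicat_real {u..} w *\<^sub>R (1 + w) powr (- (al + be) - 1)) \<le> indicat_real {u..} w *\<^sub>R kf al be w"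
      proof (cases "w \<ge> u")
        case True
        hence w: "w > 0" using u by auto
        have "u powr (al-1) \<le> w powr (al-1)" using True u al by (intro powr_mono2) auto
        hence "u powr (al-1) * (1 + w) powr (-(al+be+1)) \<le> kf al be w"
          unfolding kf_def by (intro mult_right_mono) auto
        moreover have e: "- (al + be) - 1 = -(al+be+1)" by simp
        ultimately show ?thesis using True unfolding e by (simp add: indicator_def)
      qed (simp add: indicator_def)
    qed
    finally show "u powr (al-1) * (\<integral>w. indicat_real {u..} w *\<^sub>R (1 + w) powr (- (al + be) - 1) \<partial>lborel)
        \<le> (\<integral>w. indicat_real {u..} w *\<^sub>R kf al be w \<partial>lborel)" .
  qed
  moreover have "u powr (al-1) * (LINT w:{u..}|lborel. (1+w) powr (-(al+be)-1)) > 0"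
    unfolding v using u al be by auto
  ultimately show ?thesis by linarith
qed

lemma HH_strict:
  assumes u1: "u1 > 0" and u12: "u1 < u2"
  shows "HH al be u2 < HH al be u1"
proof -
  have "(u2 - u1) * J0 al be u2 > 0" using J0_pos[of u2] u1 u12 by auto
  thus ?thesis using HH_mono_ineq[of u1 u2] u1 u12 by auto
qed

lemma HH_cont:
  assumes c: "c > 0"
  shows "continuous_on {c..} (HH al be)"
proof (rule lipschitz_on_continuous_on)
  show "(J0 al be c)-lipschitz_on {c..} (HH al be)"
  proof (rule lipschitz_onI)
    fix x y assume x: "x \<in> {c..}" and y: "y \<in> {c..}"
    have key: "\<bar>HH al be a - HH al be b\<bar> \<le> J0 al be c * \<bar>a - b\<bar>" if "c \<le> a" "a \<le> b" for a b
    proof -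
      have "HH al be a - HH al be b \<le> (b - a) * J0 al be a" using HH_lip_ineq[of a b] that c by auto
      also have "\<dots> \<le> (b - a) * J0 al be c" using J0_antimono[of c a] that c by (intro mult_left_mono) auto
      finally have 1: "HH al be a - HH al be b \<le> (b - a) * J0 al be c" .
      have 2: "HH al be b \<le> HH al be a" using HH_mono_ineq[of a b] J0_pos[of b] that c
        by (smt (verit) mult_nonneg_nonneg)
      show ?thesis using 1 2 that by (simp add: mult.commute)
    qed
    show "dist (HH al be x) (HH al be y) \<le> J0 al be c * dist x y"
    proof (cases "x \<le> y")
      case True thus ?thesis using key[of x y] x by (simp add: dist_real_def)
    next
      case False thus ?thesis using key[of y x] y by (simp add: dist_real_def abs_minus_commute)
    qed
  next
    show "0 \<le> J0 al be c" using J0_pos[OF c] by simp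
  qed
qed

end

context
  fixes al be :: real
  assumes al: "al \<ge> 1" and be: "be > 0"
begin

lemma wkf_split:
  assumes w: "w > 0"
  shows "w * kf al be w = (w/(1+w)) powr al * (1+w) powr (-be-1)"
proof -
  have "w * kf al be w = w powr al * (1+w) powr (-(al+be+1))" using wkf_eq[OF w] .
  also have "(1+w) powr (-(al+be+1)) = (1+w) powr (-be-1) / (1+w) powr al"
  proof -
    have e: "-(al+be+1) = (-be-1) - al" by simp
    have "(1+w) powr (-(al+be+1)) = (1+w) powr ((-be-1) - al)" by (simp only: e)
    also have "\<dots> = (1+w) powr (-be-1) / (1+w) powr al" by (rule powr_diff)
    finally show ?thesis .
  qed
  also have "w powr al * ((1+w) powr (-be-1) / (1+w) powr al) = (w/(1+w)) powr al * (1+w) powr (-be-1)"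
    using w by (simp add: powr_divide)
  finally show ?thesis .
qed

lemma HH_upper:
  assumes u: "u > 0"
  shows "HH al be u \<le> (1+u) powr (-be) / be"
proof -
  have int: "set_integrable lborel {u..} (\<lambda>w. (1+w) powr (-be-1))"
    using tail_pow1(1)[of u be] u be by auto
  have "HH al be u = (\<integral>w. indicator {u..} w * ((w - u) * kf al be w) \<partial>lborel)"
    unfolding HH_def set_lebesgue_integral_def by simp
  also have "\<dots> \<le> (\<integral>w. indicator {u..} w * (1+w) powr (-be-1) \<partial>lborel)"
  proof (rule integral_mono)
    show "integrable lborel (\<lambda>w. indicator {u..} w * ((w - u) * kf al be w))"
      using ind_int[OF al be u] .
    show "integrable lborel (\<lambda>w. indicator {u..} w * (1+w) powr (-be-1))"
      using int unfolding set_integrable_def by simp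
    fix w :: real
    show "indicator {u..} w * ((w - u) * kf al be w) \<le> indicator {u..} w * (1+w) powr (-be-1)"
    proof (cases "w \<ge> u")
      case True
      hence w: "w > 0" using u by auto
      have k: "kf al be w \<ge> 0" using w by (rule kf_nonneg)
      have "(w - u) * kf al be w \<le> w * kf al be w" using k u by (intro mult_right_mono) auto
      also have "\<dots> = (w/(1+w)) powr al * (1+w) powr (-be-1)" by (rule wkf_split[OF w])
      also have "\<dots> \<le> 1 * (1+w) powr (-be-1)"
      proof (intro mult_right_mono)
        have "(w/(1+w)) powr al \<le> 1 powr al" using w al by (intro powr_mono2) auto
        thus "(w/(1+w)) powr al \<le> 1" by simp
      qed auto
      finally show ?thesis using True by (simp add: indicator_def)
    qed (simp add: indicator_def)
  qed
  also have "\<dots> = (1+u) powr (-be) / be"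
    using tail_pow1(2)[of u be] u be unfolding set_lebesgue_integral_def by simp
  finally show ?thesis .
qed

lemma HH_lower:
  assumes u: "u > 0"
  shows "(2*u/(1+2*u)) powr al * (1+2*u) powr (-be) / (2*be) \<le> HH al be u"
proof -
  define v where "v = 2*u"
  have v: "v > 0" "v \<ge> u" using u by (auto simp: v_def)
  define c where "c = (v/(1+v)) powr al / 2"
  have int: "set_integrable lborel {v..} (\<lambda>w. (1+w) powr (-be-1))"
    using tail_pow1(1)[of v be] v be by auto
  have "c * ((1+v) powr (-be) / be) = c * (\<integral>w. indicator {v..} w * (1+w) powr (-be-1) \<partial>lborel)"
    using tail_pow1(2)[of v be] v be unfolding set_lebesgue_integral_def by simp
  also have "\<dots> = (\<integral>w. c * (indicator {v..} w * (1+w) powr (-be-1)) \<partial>lborel)" by simp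
  also have "\<dots> \<le> (\<integral>w. indicator {u..} w * ((w - u) * kf al be w) \<partial>lborel)"
  proof (rule integral_mono)
    show "integrable lborel (\<lambda>w. indicator {u..} w * ((w - u) * kf al be w))"
      using ind_int[OF al be u] .
    show "integrable lborel (\<lambda>w. c * (indicator {v..} w * (1+w) powr (-be-1)))"
      using int unfolding set_integrable_def by simp
    fix w :: real
    show "c * (indicator {v..} w * (1+w) powr (-be-1)) \<le> indicator {u..} w * ((w - u) * kf al be w)"
    proof (cases "w \<ge> v")
      case True
      hence w: "w > 0" using v by auto
      have k: "kf al be w \<ge> 0" using w by (rule kf_nonneg)
      have "c * (1+w) powr (-be-1) \<le> (w/(1+w)) powr al / 2 * (1+w) powr (-be-1)"
        unfolding c_def
      proof (intro mult_right_mono divide_right_mono powr_mono2)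
        show "v / (1 + v) \<le> w / (1 + w)" using True v by (simp add: field_simps)
      qed (use al v in auto)
      also have "\<dots> = (w * kf al be w) / 2" using wkf_split[OF w] by simp
      also have "\<dots> \<le> (w - u) * kf al be w"
      proof -
        have "(2*u) * kf al be w \<le> w * kf al be w" using k True unfolding v_def by (intro mult_right_mono) auto
        thus ?thesis by (simp add: algebra_simps)
      qed
      finally show ?thesis using True v by (simp add: indicator_def)
    next
      case False
      have "0 \<le> indicator {u..} w * ((w - u) * kf al be w)"
        using kf_nonneg[of w al be] u by (auto simp: indicator_def)
      thus ?thesis using False by (simp add: indicator_def)
    qed
  qed
  also have "\<dots> = HH al be u" unfolding HH_def set_lebesgue_integral_def by simp
  finally show ?thesis unfolding c_def v_def by simp
qed

end

lemma lnGamma_plus1: "x > 0 \<Longrightarrow> ln (Gamma (x + 1)) = ln x + ln (Gamma x :: real)"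
proof -
  assume x: "x > 0"
  have "x \<notin> \<int>\<^sub>\<le>\<^sub>0" using x by (auto elim!: nonpos_Ints_cases)
  hence "Gamma (x+1) = x * Gamma x" by (rule Gamma_plus1)
  moreover have gx: "Gamma x \<noteq> 0" using x by (auto simp: Gamma_eq_zero_iff elim!: nonpos_Ints_cases)
  ultimately show ?thesis using x gx by (simp add: ln_mult)
qed

lemma Gamma_ratio_lower:
  fixes b h :: real assumes b: "b > 0" and h: "h \<ge> 1"
  shows "b powr h * Gamma b \<le> Gamma (b + h)"
proof -
  let ?p = "ln \<circ> Gamma :: real \<Rightarrow> real"
  have cvx: "convex_on {0<..} ?p" by (rule log_convex_Gamma_real)
  have "?p ((1 - 1/h) *\<^sub>R b + (1/h) *\<^sub>R (b + h)) \<le> (1 - 1/h) * ?p b + (1/h) * ?p (b+h)"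
    by (rule convex_onD[OF cvx]) (use b h in auto)
  moreover have "(1 - 1/h) *\<^sub>R b + (1/h) *\<^sub>R (b + h) = b + 1" using h by (simp add: field_simps)
  ultimately have "ln (Gamma (b+1)) \<le> (1 - 1/h) * ln (Gamma b) + (1/h) * ln (Gamma (b+h))" by simp
  hence "ln b + ln (Gamma b) \<le> (1 - 1/h) * ln (Gamma b) + (1/h) * ln (Gamma (b+h))"
    using lnGamma_plus1[OF b] by simp
  hence "h * (ln b + ln (Gamma b)) \<le> h * ((1 - 1/h) * ln (Gamma b) + (1/h) * ln (Gamma (b+h)))"
    using h by (intro mult_left_mono) auto
  hence "h * ln b + ln (Gamma b) \<le> ln (Gamma (b+h))" using h by (simp add: algebra_simps)
  hence "exp (h * ln b + ln (Gamma b)) \<le> exp (ln (Gamma (b+h)))" by simp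
  moreover have "exp (h * ln b + ln (Gamma b)) = b powr h * Gamma b"
    using b by (simp add: exp_add powr_def)
  moreover have "exp (ln (Gamma (b+h))) = Gamma (b+h)" using b h by simp
  ultimately show ?thesis by simp
qed

lemma Gamma_upper:
  fixes a :: real assumes a: "a \<ge> 1"
  shows "Gamma (a + 1) \<le> a powr a"
proof -
  let ?p = "ln \<circ> Gamma :: real \<Rightarrow> real"
  have cvx: "convex_on {0<..} ?p" by (rule log_convex_Gamma_real)
  define t where "t = (a - 1) / a"
  have t: "0 \<le> t" "t \<le> 1" using a by (auto simp: t_def field_simps)
  have "?p ((1 - t) *\<^sub>R 1 + t *\<^sub>R (a + 1)) \<le> (1 - t) * ?p 1 + t * ?p (a+1)"
    by (rule convex_onD[OF cvx t]) (use a in auto)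
  moreover have "(1 - t) *\<^sub>R 1 + t *\<^sub>R (a + 1) = a" using a unfolding t_def
    by (simp add: field_simps power2_eq_square)
  ultimately have "ln (Gamma a) \<le> t * ln (Gamma (a+1))" by simp
  hence "ln (Gamma (a+1)) - ln a \<le> t * ln (Gamma (a+1))" using lnGamma_plus1[of a] a by simp
  hence "a * (ln (Gamma (a+1)) - ln a) \<le> a * (t * ln (Gamma (a+1)))" using a by (intro mult_left_mono) auto
  hence "ln (Gamma (a+1)) \<le> a * ln a" using a unfolding t_def by (simp add: field_simps)
  hence "exp (ln (Gamma (a+1))) \<le> exp (a * ln a)" by simp
  thus ?thesis using a by (simp add: powr_def)
qed

lemma Beta_upper1:
  fixes a b :: real assumes a: "a \<ge> 0" and b: "b > 0"
  shows "Beta (a+1) b \<le> 1 / b"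
proof -
  have "Beta (a+1) b \<le> Beta 1 b" by (rule Beta_real_mono) (use a b in auto)
  also have "Beta 1 b = 1 / b"
  proof -
    have "b \<notin> \<int>\<^sub>\<le>\<^sub>0" using b by (auto elim!: nonpos_Ints_cases)
    hence "Gamma (b+1) = b * Gamma b" by (rule Gamma_plus1)
    moreover have gb: "Gamma b \<noteq> 0" using b by (auto simp: Gamma_eq_zero_iff elim!: nonpos_Ints_cases)
    ultimately show ?thesis unfolding Beta_def using b gb by (simp add: add.commute)
  qed
  finally show ?thesis .
qed

lemma Beta_upper2:
  fixes a b :: real assumes a: "a \<ge> 1" and b: "b > 0"
  shows "Beta (a+1) b \<le> a powr a / b powr (a+1)"
proof -
  have g1: "Gamma (a+1) \<le> a powr a" by (rule Gamma_upper[OF a])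
  have g2: "b powr (a+1) * Gamma b \<le> Gamma (b + (a+1))" by (rule Gamma_ratio_lower) (use a b in auto)
  have gb: "Gamma b > 0" using b by auto
  have ga: "Gamma (a+1) > 0" using a by auto
  have "Beta (a+1) b = Gamma (a+1) * Gamma b / Gamma (b + (a+1))" unfolding Beta_def by (simp add: add_ac)
  also have "\<dots> \<le> a powr a * Gamma b / (b powr (a+1) * Gamma b)"
    using g1 g2 gb ga b by (intro frac_le mult_right_mono mult_pos_pos) auto
  also have "\<dots> = a powr a / b powr (a+1)" using gb by simp
  finally show ?thesis .
qed

lemma exp_half_le2: "exp (1/2::real) \<le> 2"
proof -
  have "exp (1/2::real) * exp (1/2) = exp 1" by (simp flip: exp_add)
  also have "\<dots> \<le> 3" by (rule exp_le)
  finally have "exp (1/2::real) * exp (1/2) \<le> 3" .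
  show ?thesis
  proof (rule ccontr)
    assume "\<not> exp (1/2::real) \<le> 2"
    hence "2 < exp (1/2::real)" by simp
    hence "2 * 2 < exp (1/2::real) * exp (1/2)" by (intro mult_strict_mono) auto
    thus False using \<open>exp (1/2::real) * exp (1/2) \<le> 3\<close> by simp
  qed
qed

lemma ln2_ge: "ln (2::real) \<ge> 1/2"
proof -
  have "ln (exp (1/2)) \<le> ln (2::real)" using exp_half_le2 by (subst ln_le_cancel_iff) auto
  thus ?thesis by simp
qed

lemma ln2_le: "ln (2::real) \<le> 3/4"
proof -
  have "1 + 3/4 + (3/4)\<^sup>2/2 \<le> exp (3/4::real)" by (rule exp_lower_Taylor_quadratic) simp
  hence "2 \<le> exp (3/4::real)" by (simp add: power2_eq_square)
  hence "ln 2 \<le> ln (exp (3/4::real))" by (subst ln_le_cancel_iff) auto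
  thus ?thesis by simp
qed

lemma one_plus_le_2powr: assumes x: "x \<ge> (1::real)" shows "1 + x \<le> 2 powr x"
proof -
  have "2 powr x = 2 * exp ((x - 1) * ln 2)"
    by (simp add: powr_def exp_diff algebra_simps exp_add[symmetric])
  moreover have "1 + (x - 1) * ln 2 \<le> exp ((x - 1) * ln 2)" by (rule exp_ge_add_one_self)
  moreover have "(x - 1) * (1/2) \<le> (x - 1) * ln 2" using x ln2_ge by (intro mult_left_mono) auto
  ultimately show ?thesis
  proof -
    assume a: "2 powr x = 2 * exp ((x - 1) * ln 2)" and b: "1 + (x - 1) * ln 2 \<le> exp ((x - 1) * ln 2)"
      and c: "(x - 1) * (1/2) \<le> (x - 1) * ln 2"
    have "1 + (x-1)/2 \<le> 1 + (x - 1) * ln 2" using c by simp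
    also have "\<dots> \<le> exp ((x - 1) * ln 2)" by (rule b)
    finally have "1 + (x-1)/2 \<le> exp ((x - 1) * ln 2)" .
    hence l: "2 * (1 + (x-1)/2) \<le> 2 * exp ((x - 1) * ln 2)" by (rule mult_left_mono) simp
    have "1 + x = 2 * (1 + (x-1)/2)" by (simp add: field_simps)
    also note l
    finally have "1 + x \<le> 2 * exp ((x - 1) * ln 2)" .
    thus ?thesis using a by simp
  qed
qed

lemma final_ineq:
  fixes al be :: real assumes al: "al \<ge> 1" and be: "be > 0"
  defines "u \<equiv> al / be"
  shows "exp (3/2 - 3*al) / (4*al\<^sup>2) \<le>
     (2*u/(1+2*u)) powr al * (1+2*u) powr (-be) / (2*be) / Beta (al+1) be"
proof -
  have u: "u > 0" using al be by (simp add: u_def)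
  have ub: "u * be = al" using be by (simp add: u_def)
  define P where "P = (2*u/(1+2*u)) powr al * (1+2*u) powr (-be)"
  have P: "P > 0" unfolding P_def using u by auto
  define B1 where "B1 = Beta (al+1) be"
  have B1: "B1 > 0" unfolding B1_def using al be by (intro Beta_pos) auto
  have "al * al \<ge> 1 * 1" using al by (intro mult_mono) auto
  hence a4: "4 * al\<^sup>2 \<ge> 4" by (simp add: power2_eq_square)
  show ?thesis
  proof (cases "be \<ge> 2*al")
    case True
    have b1: "B1 \<le> al powr al / be powr (al+1)" unfolding B1_def by (rule Beta_upper2[OF al be])
    have "P * (be powr (al+1) / al powr al) / (2*be) \<le> P / (2*be) / B1"
    proof -
      have "be powr (al+1) / al powr al \<le> 1 / B1"
        using b1 B1 al be by (simp add: field_simps)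
      hence "P / (2*be) * (be powr (al+1) / al powr al) \<le> P / (2*be) * (1 / B1)"
        using P be by (intro mult_left_mono) auto
      thus ?thesis by (simp add: mult_ac)
    qed
    moreover have "P * (be powr (al+1) / al powr al) / (2*be) = (2/(1+2*u)) powr al * (1+2*u) powr (-be) / 2"
    proof -
      have "be powr (al+1) = be powr al * be" using be by (simp add: powr_add)
      hence r1: "P * (be powr (al+1) / al powr al) / (2*be) = P * (be/al) powr al / 2"
        using be al by (simp add: powr_divide field_simps)
      have r2: "(2*u/(1+2*u)) powr al * (be/al) powr al = (2*u/(1+2*u) * (be/al)) powr al"
        using u be al powr_mult[of "2*u/(1+2*u)" "be/al" al] by simp
      have r3: "2*u/(1+2*u) * (be/al) = 2/(1+2*u)"
      proof -
        have "2*u/(1+2*u) * (be/al) = (2*(u*be))/((1+2*u)*al)" by (simp add: mult_ac)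
        also have "\<dots> = (2*al)/((1+2*u)*al)" by (simp only: ub)
        also have "\<dots> = 2/(1+2*u)" using al by simp
        finally show ?thesis .
      qed
      have "P * (be/al) powr al / 2 = ((2*u/(1+2*u)) powr al * (be/al) powr al) * (1+2*u) powr (-be) / 2"
        unfolding P_def by (simp add: mult_ac)
      also have "\<dots> = (2/(1+2*u)) powr al * (1+2*u) powr (-be) / 2" unfolding r2 r3 ..
      finally show ?thesis using r1 by simp
    qed
    moreover have "(2/(1+2*u)) powr al \<ge> 1"
    proof (rule ge_one_powr_ge_zero)
      have "2*u \<le> 1" using True be unfolding u_def by (simp add: field_simps)
      thus "1 \<le> 2/(1+2*u)" using u by (simp add: field_simps)
    qed (use al in auto)
    moreover have "(1+2*u) powr (-be) \<ge> exp (-2*al)"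
    proof -
      have "(1+2*u) powr (-be) = exp (-be * ln (1+2*u))" using u by (simp add: powr_def)
      moreover have "ln (1+2*u) \<le> 2*u" using u by (intro ln_add_one_self_le_self) auto
      hence "be * ln (1+2*u) \<le> be * (2*u)" using be by (intro mult_left_mono) auto
      hence "-be * ln (1+2*u) \<ge> -2*al" using ub by (simp add: algebra_simps)
      ultimately show ?thesis by simp
    qed
    ultimately have "exp (-2*al) / 2 \<le> P / (2*be) / B1"
    proof -
      assume h1: "P * (be powr (al+1) / al powr al) / (2*be) \<le> P / (2*be) / B1"
        and h2: "P * (be powr (al+1) / al powr al) / (2*be) = (2/(1+2*u)) powr al * (1+2*u) powr (-be) / 2"
        and h3: "(2/(1+2*u)) powr al \<ge> 1" and h4: "(1+2*u) powr (-be) \<ge> exp (-2*al)"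
      have "1 * exp (-2*al) \<le> (2/(1+2*u)) powr al * (1+2*u) powr (-be)"
        using h3 h4 by (intro mult_mono) auto
      hence "exp (-2*al) / 2 \<le> (2/(1+2*u)) powr al * (1+2*u) powr (-be) / 2"
        by (intro divide_right_mono) auto
      also have "\<dots> = P * (be powr (al+1) / al powr al) / (2*be)" using h2 by simp
      also note h1
      finally show ?thesis .
    qed
    moreover have "exp (3/2 - 3*al) / (4*al\<^sup>2) \<le> exp (-2*al) / 2"
    proof -
      have "exp (3/2 - 3*al) = exp (3/2 - al) * exp (-2*al)" by (simp flip: exp_add)
      moreover have "exp (3/2 - al) \<le> exp (1/2)" using al by simp
      hence "exp (3/2 - al) \<le> 2" using exp_half_le2 by linarith
      ultimately have e: "exp (3/2 - 3*al) \<le> 2 * exp (-2*al)"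
        by (metis exp_gt_zero mult_right_mono order_less_imp_le)
      have "exp (3/2 - 3*al) / (4*al\<^sup>2) \<le> exp (3/2 - 3*al) / 4"
        using a4 by (intro divide_left_mono) auto
      also have "\<dots> \<le> 2 * exp (-2*al) / 4" using e by (intro divide_right_mono) auto
      finally show ?thesis by simp
    qed
    ultimately show ?thesis unfolding P_def B1_def by linarith
  next
    case False
    have b1: "B1 \<le> 1 / be" unfolding B1_def by (rule Beta_upper1) (use al be in auto)
    have "P / 2 \<le> P / (2*be) / B1"
    proof -
      have "be \<le> 1 / B1" using b1 B1 be by (simp add: field_simps)
      hence "P / (2*be) * be \<le> P / (2*be) * (1 / B1)" using P be by (intro mult_left_mono) auto
      thus ?thesis using be by simp
    qed
    moreover have "(2*u/(1+2*u)) powr al \<ge> (1/2) powr al"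
    proof (rule powr_mono2)
      have "2*u \<ge> 1" using False be unfolding u_def by (simp add: field_simps)
      thus "1/2 \<le> 2*u/(1+2*u)" using u by (simp add: field_simps)
    qed (use al in auto)
    moreover have "(1+2*u) powr (-be) \<ge> exp (-2*al*ln 2)"
    proof -
      have "2*u \<ge> 1" using False be unfolding u_def by (simp add: field_simps)
      hence "1 + 2*u \<le> 2 powr (2*u)" by (rule one_plus_le_2powr)
      hence "ln (1 + 2*u) \<le> 2*u * ln 2" using u by (simp add: ln_powr[symmetric] del: ln_powr)
      hence "be * ln (1+2*u) \<le> be * (2*u * ln 2)" using be by (intro mult_left_mono) auto
      moreover have "be * (2*u * ln 2) = (be*u) * (2 * ln 2)" by (simp add: mult_ac)
      moreover have bu: "be * u = al" using ub by (simp add: mult.commute)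
      ultimately have "be * ln (1+2*u) \<le> al * (2 * ln 2)" by simp
      hence "-be * ln (1+2*u) \<ge> -2*al*ln 2" by (simp add: algebra_simps)
      moreover have "(1+2*u) powr (-be) = exp (-be * ln (1+2*u))" using u by (simp add: powr_def)
      ultimately show ?thesis by simp
    qed
    moreover have "(1/2::real) powr al = exp (-al * ln 2)" by (simp add: powr_def ln_div)
    ultimately have "exp (-al * ln 2) * exp (-2*al*ln 2) / 2 \<le> P / (2*be) / B1"
    proof -
      assume h1: "P / 2 \<le> P / (2*be) / B1"
        and h3: "(2*u/(1+2*u)) powr al \<ge> (1/2) powr al" and h4: "(1+2*u) powr (-be) \<ge> exp (-2*al*ln 2)"
        and h5: "(1/2::real) powr al = exp (-al * ln 2)"
      have "exp (-al * ln 2) * exp (-2*al*ln 2) \<le> (2*u/(1+2*u)) powr al * (1+2*u) powr (-be)"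
        using h3 h4 h5 by (intro mult_mono) auto
      thus ?thesis using h1 unfolding P_def by simp
    qed
    moreover have "exp (-al * ln 2) * exp (-2*al*ln 2) = exp (-3*al*ln 2)" by (simp flip: exp_add add: algebra_simps)
    moreover have "exp (3/2 - 3*al) / (4*al\<^sup>2) \<le> exp (-3*al*ln 2) / 2"
    proof -
      have "exp (3/2 - 3*al) = exp (3/2 - 3*al + 3*al*ln 2) * exp (-3*al*ln 2)" by (simp flip: exp_add)
      moreover have "3/2 - 3*al + 3*al*ln 2 \<le> ln 2"
      proof -
        have "3*al*(1 - ln 2) \<ge> 3*(1 - ln 2)" using al ln_2_less_1 by (intro mult_right_mono) auto
        thus ?thesis using ln2_le by (simp add: algebra_simps)
      qed
      hence "exp (3/2 - 3*al + 3*al*ln 2) \<le> exp (ln 2)" by (simp only: exp_le_cancel_iff)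
      hence "exp (3/2 - 3*al + 3*al*ln 2) \<le> 2" by simp
      ultimately have e: "exp (3/2 - 3*al) \<le> 2 * exp (-3*al*ln 2)"
        by (metis exp_gt_zero mult_right_mono order_less_imp_le)
      have "exp (3/2 - 3*al) / (4*al\<^sup>2) \<le> exp (3/2 - 3*al) / 4"
        using a4 by (intro divide_left_mono) auto
      also have "\<dots> \<le> 2 * exp (-3*al*ln 2) / 4" using e by (intro divide_right_mono) auto
      finally show ?thesis by simp
    qed
    ultimately show ?thesis unfolding P_def B1_def by linarith
  qed
qed

lemma choose_lower:
  fixes p d :: nat
  assumes p: "p \<ge> 1" and d: "d \<ge> 1" and h: "real d \<le> exp (- 3 / 2) * (real p - 1)"
  shows "exp (3/2 * real d) \<le> real ((p - 1) choose d)"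
proof -
  have rp: "real (p - 1) = real p - 1" using p by (simp add: of_nat_diff)
  have "exp (3/2) * real d \<le> exp (3/2) * (exp (- 3 / 2) * (real p - 1))"
    using h by (intro mult_left_mono) auto
  also have "\<dots> = real p - 1" by (simp add: mult.assoc[symmetric] exp_add[symmetric])
  finally have r: "exp (3/2) \<le> real (p - 1) / real d" using d rp by (simp add: field_simps)
  have dle: "d \<le> p - 1"
  proof -
    have "exp (-3/2::real) \<le> 1" by simp
    hence "exp (- 3 / 2) * (real p - 1) \<le> 1 * (real p - 1)" using p by (intro mult_right_mono) auto
    hence "real d \<le> real (p - 1)" using h rp by simp
    thus ?thesis by simp
  qed
  have "exp (3/2 * real d) = exp (3/2) ^ d" by (simp add: exp_of_nat_mult[symmetric] mult.commute)
  also have "\<dots> \<le> (real (p - 1) / real d) ^ d" using r by (intro power_mono) auto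
  also have "\<dots> \<le> real ((p - 1) choose d)" by (rule binomial_ge_n_over_k_pow_k[OF dle])
  finally show ?thesis .
qed

theorem lemma3:
  fixes n p d :: nat
  assumes "n \<ge> 1" and "p \<ge> 1" and "d \<ge> 1"
    and "real d \<le> exp (- 3 / 2) * (real p - 1)"
    and "int n - int d - 1 \<ge> 1"
  shows "EDKhi (d + 1) (n - d - 1) (1 / (real ((p - 1) choose d) * (real d + 1) ^ 2)) \<ge> real d + 1"
proof -
  define D where "D = d + 1"
  define N where "N = n - d - 1"
  have D: "D \<ge> 2" using assms(3) by (simp add: D_def)
  have N: "N \<ge> 1" using assms(5) by (simp add: N_def)
  define al where "al = real D / 2"
  define be where "be = real N / 2"
  have al: "al \<ge> 1" using D by (simp add: al_def)
  have be: "be > 0" using N by (simp add: be_def)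
  define B1 where "B1 = Beta (al + 1) be"
  have B1: "B1 > 0" unfolding B1_def using al be by (intro Beta_pos) auto
  define C where "C = real ((p - 1) choose d)"
  have C: "exp (3/2 * real d) \<le> C" unfolding C_def by (rule choose_lower) (use assms in auto)
  have Cpos: "C > 0" using C exp_gt_zero[of "3/2 * real d"] by linarith
  define y where "y = 1 / (C * (real d + 1) ^ 2)"
  have ypos: "y > 0" unfolding y_def using Cpos by auto
  define F where "F = (\<lambda>x. HH al be (x / real N) / B1)"
  have GF: "DKhi D N x = F x" if "x > 0" for x
    unfolding F_def al_def be_def B1_def using DKhi_eq[OF D N that] by simp
  have yle: "y \<le> exp (3/2 - 3*al) / (4*al\<^sup>2)"
  proof -
    have e1: "3/2 - 3*al = - (3/2 * real d)" unfolding al_def D_def by (simp add: field_simps)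
    have e2: "4*al\<^sup>2 = (real d + 1)^2" unfolding al_def D_def by (simp add: power2_eq_square field_simps)
    have "y = 1 / C / (real d + 1) ^ 2" unfolding y_def by simp
    also have "\<dots> \<le> exp (- (3/2 * real d)) / (real d + 1)^2"
    proof (intro divide_right_mono)
      have "1 / C \<le> 1 / exp (3/2 * real d)" using C Cpos by (intro divide_left_mono) auto
      thus "1 / C \<le> exp (- (3/2 * real d))" by (simp add: exp_minus field_simps)
    qed auto
    finally show ?thesis unfolding e1 e2 .
  qed
  have uD: "real D / real N = al / be" unfolding al_def be_def by simp
  have FD: "y \<le> F (real D)"
  proof -
    have "exp (3/2 - 3*al) / (4*al\<^sup>2) \<le>
       (2*(al/be)/(1+2*(al/be))) powr al * (1+2*(al/be)) powr (-be) / (2*be) / Beta (al+1) be"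
      by (rule final_ineq[OF al be])
    also have "\<dots> \<le> HH al be (al/be) / B1"
      unfolding B1_def using HH_lower[OF al be, of "al/be"] al be B1 B1_def
      by (intro divide_right_mono) auto
    finally show ?thesis using yle unfolding F_def uD by simp
  qed
  define K where "K = (y * be * B1) powr (-1/be)"
  have Kpos: "K > 0" unfolding K_def using ypos be B1 by auto
  define X where "X = max (real D) (real N * K)"
  have XD: "real D \<le> X" unfolding X_def by simp
  have FX: "F X \<le> y"
  proof -
    have Xpos: "X > 0" using XD D by linarith
    have "HH al be (X / real N) \<le> (1 + X / real N) powr (-be) / be"
      by (rule HH_upper[OF al be]) (use Xpos N in auto)
    also have "(1 + X / real N) powr (-be) \<le> K powr (-be)"
    proof (rule powr_mono2')
      have "K \<le> X / real N" using N unfolding X_def by (simp add: field_simps)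
      thus "K \<le> 1 + X / real N" by linarith
    qed (use be Kpos in auto)
    hence "(1 + X / real N) powr (-be) / be \<le> K powr (-be) / be" using be by (intro divide_right_mono) auto
    also have "K powr (-be) = y * be * B1"
      unfolding K_def using ypos be B1 by (simp add: powr_powr)
    finally have "HH al be (X / real N) \<le> y * B1" using be by simp
    thus ?thesis unfolding F_def using B1 by (simp add: field_simps)
  qed
  have contF: "continuous_on {real D..X} F"
  proof -
    have c0: "real D / real N > 0" using D N by auto
    have "continuous_on {real D / real N..} (HH al be)" by (rule HH_cont[OF al be c0])
    moreover have "continuous_on {real D..X} (\<lambda>x. x / real N)" using N by (intro continuous_intros) auto
    moreover have "(\<lambda>x. x / real N) ` {real D..X} \<subseteq> {real D / real N..}"
      using N by (auto simp: field_simps)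
    ultimately have "continuous_on {real D..X} (HH al be \<circ> (\<lambda>x. x / real N))"
      by (intro continuous_on_compose) (auto intro: continuous_on_subset)
    hence "continuous_on {real D..X} (\<lambda>x. HH al be (x / real N))" by (simp add: o_def)
    thus ?thesis unfolding F_def by (intro continuous_intros) (use B1 in auto)
  qed
  obtain x0 where x0: "real D \<le> x0" "x0 \<le> X" "F x0 = y"
    using IVT2'[of F X y "real D", OF FX FD XD contF] by blast
  have Fstrict: "F b < F a" if "0 < a" "a < b" for a b
  proof -
    have "HH al be (b / real N) < HH al be (a / real N)"
      by (rule HH_strict[OF al be]) (use that N in \<open>auto simp: field_simps\<close>)
    thus ?thesis unfolding F_def using B1 by (simp add: divide_strict_right_mono)
  qed
  have x0pos: "x0 > 0" using x0 D by linarith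
  have "EDKhi D N y = x0"
    unfolding EDKhi_def
  proof (rule the_equality)
    show "0 < x0 \<and> DKhi D N x0 = y" using x0pos GF x0 by auto
    fix x assume hx: "0 < x \<and> DKhi D N x = y"
    hence Fx: "F x = y" using GF by auto
    show "x = x0"
    proof (rule ccontr)
      assume "x \<noteq> x0"
      hence "x < x0 \<or> x0 < x" by auto
      thus False using Fstrict[of x x0] Fstrict[of x0 x] hx x0pos Fx x0(3) by auto
    qed
  qed
  hence "EDKhi D N y \<ge> real D" using x0 by simp
  thus ?thesis unfolding D_def N_def y_def C_def by simp
qed

end
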